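(* Let $\gamma>0$, $\lambda>0$ and $\omega\in[-\pi,\pi]$, and let $f$ be the $\mathrm{GCPC}(\omega,\gamma,\lambda)$ density on the circle. - (i) If $\lambda=1$, then $f$ is unimodal. - (A) If $1<\lambda\le\gamma^2+1$, then $f$ is unimodal. - (B) If $\lambda>\gamma^2+1$, then $f$ is unimodal when $(\gamma^2+1)(\lambda-1)>(\lambda-\gamma^2-1)(2\lambda-1)^2$. - (C) If $\tfrac12<\lambda<1$, then $f$ is unimodal when $(\gamma^2+1-\lambda)(1-2\lambda)^2>(\gamma^2+1)(1-\lambda)$. - (D) If $\lambda\le\tfrac12$, then $f$ is never unimodal (it has more than one local maximum).
   Context: For $\lambda>0$, $\gamma\ge0$ and $\omega\in[-\pi,\pi]$, the distribution $\mathrm{GCPC}(\omega,\gamma,\lambda)$ is the distribution on the circle with density $$f(\theta)=\frac{1}{2\pi\sqrt{\lambda}\,\bigl(b\sqrt{\gamma^2+1}-\gamma\cos\phi\,\sqrt{b}\bigr)},\qquad \phi=\theta-\omega,\quad b=\cos^2\phi+\frac{\sin^2\phi}{\lambda}.$$ A density on the circle is called unimodal if it has exactly one local maximum on the circle. The density is viewed as a $2\pi$-periodic function of $\theta$. *)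

theory Defs
  imports "HOL-Analysis.Analysis"
begin

definition gcpc_density :: "real \<Rightarrow> real \<Rightarrow> real \<Rightarrow> real \<Rightarrow> real" where
  "gcpc_density \<omega> \<gamma> lam \<theta> =
     (let \<phi> = \<theta> - \<omega>;
          b = (cos \<phi>)\<^sup>2 + (sin \<phi>)\<^sup>2 / lam
      in 1 / (2 * pi * sqrt lam * (b * sqrt (\<gamma>\<^sup>2 + 1) - \<gamma> * cos \<phi> * sqrt b)))"

text \<open>Local maximum of a real function (on the real line; for a 2 pi-periodic
  function this is the same as a local maximum on the circle).\<close>
definition is_local_max :: "(real \<Rightarrow> real) \<Rightarrow> real \<Rightarrow> bool" where
  "is_local_max f x \<longleftrightarrow> (\<exists>e>0. \<forall>y. \<bar>y - x\<bar> < e \<longrightarrow> f y \<le> f x)"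

text \<open>A 2 pi-periodic function viewed on the circle: points of the circle are
  represented by their unique representative in [0, 2 pi).  Unimodal = exactly one
  local maximum on the circle.\<close>
definition circ_local_maxima :: "(real \<Rightarrow> real) \<Rightarrow> real set" where
  "circ_local_maxima f = {x \<in> {0..<2*pi}. is_local_max f x}"

definition unimodal_circ :: "(real \<Rightarrow> real) \<Rightarrow> bool" where
  "unimodal_circ f \<longleftrightarrow> (\<exists>!x. x \<in> circ_local_maxima f)"

end

theory Submission
  imports Defs
begin

definition Bf :: "real \<Rightarrow> real \<Rightarrow> real" where
  "Bf l c = (1 + (l - 1) * c\<^sup>2) / l"

definition Hf :: "real \<Rightarrow> real \<Rightarrow> real \<Rightarrow> real \<Rightarrow> real" where
  "Hf G g l c = G * Bf l c - g * c * sqrt (Bf l c)"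

lemma Bf_alt: "l > 0 \<Longrightarrow> Bf l c = c\<^sup>2 + (1 - c\<^sup>2) / l"
  unfolding Bf_def by (simp add: field_simps)

lemma Bf_ge: assumes "l > 0" "c\<^sup>2 \<le> 1" shows "Bf l c \<ge> c\<^sup>2" "Bf l c > 0"
proof -
  have "(1 - c\<^sup>2) / l \<ge> 0" using assms by simp
  then show "Bf l c \<ge> c\<^sup>2" using Bf_alt[OF assms(1)] by simp
  show "Bf l c > 0"
  proof (cases "c = 0")
    case True then show ?thesis using assms by (simp add: Bf_def)
  next
    case False then have "c\<^sup>2 > 0" by simp
    with \<open>(1 - c\<^sup>2) / l \<ge> 0\<close> show ?thesis using Bf_alt[OF assms(1)] by (metis add_pos_nonneg)
  qed
qed

lemma Hf_pos:
  assumes "g > 0" "l > 0" "c\<^sup>2 \<le> 1"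
  shows "Hf (sqrt (g\<^sup>2 + 1)) g l c > 0"
proof -
  let ?G = "sqrt (g\<^sup>2 + 1)" let ?u = "sqrt (Bf l c)"
  have Gg: "?G > g" by (metis less_add_one real_less_rsqrt power2_eq_square)
  have u0: "?u > 0" using Bf_ge[OF assms(2,3)] by simp
  have uc: "?u \<ge> \<bar>c\<bar>" using Bf_ge[OF assms(2,3)] real_sqrt_abs real_sqrt_le_mono by metis
  have "?G * ?u > g * c"
  proof (cases "c = 0")
    case True
    have "?G > 0" using Gg assms by linarith
    then show ?thesis using u0 True by simp
  next
    case False
    have "g * c \<le> g * \<bar>c\<bar>" using assms by (simp add: mult_left_mono)
    also have "\<dots> < ?G * \<bar>c\<bar>" using Gg False by simp
    also have "\<dots> \<le> ?G * ?u" using uc by (simp add: mult_left_mono)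
    finally show ?thesis .
  qed
  then have "?u * (?G * ?u - g * c) > 0" using u0 by simp
  moreover have "?u * ?u = Bf l c" using Bf_ge[OF assms(2,3)] by simp
  moreover have "\<And>u B G. u * u = B \<Longrightarrow> G * B - g * c * u = u * (G * u - g * c)"
    by (auto simp: algebra_simps)
  ultimately show ?thesis unfolding Hf_def by metis
qed

lemma density_eq:
  assumes "l > 0"
  shows "gcpc_density w g l x = 1 / (2 * pi * sqrt l * Hf (sqrt (g\<^sup>2 + 1)) g l (cos (x - w)))"
proof -
  have "(cos (x - w))\<^sup>2 + (sin (x - w))\<^sup>2 / l = Bf l (cos (x - w))"
    using Bf_alt[OF assms] sin_squared_eq[of "x - w"] by simp
  then show ?thesis unfolding gcpc_density_def Hf_def Let_def by (simp add: algebra_simps)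
qed

lemma key_ineq:
  fixes g l c :: real
  assumes g: "g > 0" and l: "l > 1/2" and c: "c\<^sup>2 < 1"
    and cond: "(l - 1) * (g\<^sup>2 + 1 - l) \<ge> 0 \<or> g\<^sup>2 + 4 * (l - 1) * (g\<^sup>2 + 1 - l) > 0"
  shows "2 * sqrt (g\<^sup>2 + 1) * (l - 1) * c * sqrt (Bf l c) < g * (1 + 2 * (l - 1) * c\<^sup>2)"
proof -
  define k where "k = l - 1"
  define t where "t = c\<^sup>2"
  define G where "G = sqrt (g\<^sup>2 + 1)"
  define u where "u = sqrt (Bf l c)"
  define L where "L = 2 * G * k * c * u"
  define R where "R = g * (1 + 2 * k * t)"
  have l0: "l > 0" using l by simp
  have t0: "t \<ge> 0" "t < 1" using c by (auto simp: t_def)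
  have lk: "l = 1 + k" by (simp add: k_def)
  have R0: "1 + 2 * k * t > 0"
  proof (cases "k \<ge> 0")
    case True then show ?thesis using t0 by (simp add: add_pos_nonneg)
  next
    case False
    then have "k * t \<ge> k" using t0 by (simp add: mult_left_mono_neg)
    then show ?thesis using l lk by linarith
  qed
  then have Rpos: "R > 0" using g by (simp add: R_def)
  have B: "Bf l c = (1 + k * t) / l" by (simp add: Bf_def k_def t_def)
  have Bpos: "Bf l c > 0" using Bf_ge(2)[OF l0] c by simp
  have uu: "u\<^sup>2 = (1 + k * t) / l" using Bpos B by (simp add: u_def)
  have GG: "G\<^sup>2 = g\<^sup>2 + 1" by (simp add: G_def)
  have L2: "L\<^sup>2 = 4 * (g\<^sup>2 + 1) * k\<^sup>2 * t * ((1 + k * t) / l)"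
    unfolding L_def power_mult_distrib using uu GG by (simp add: t_def power_mult_distrib)
  have ident: "l * R\<^sup>2 - l * L\<^sup>2 = g\<^sup>2 * l + 4 * k * (g\<^sup>2 + 1 - l) * (t * (1 + k * t))"
    unfolding L2 R_def using l0 by (simp add: lk field_simps power2_eq_square)
  have s0: "t * (1 + k * t) \<ge> 0"
  proof -
    have "1 + k * t > 0"
    proof (cases "k \<ge> 0")
      case True then show ?thesis using t0 by (simp add: add_pos_nonneg)
    next
      case False
      then have "k * t \<ge> k" using t0 by (simp add: mult_left_mono_neg)
      then show ?thesis using l lk by linarith
    qed
    then show ?thesis using t0 by simp
  qed
  have s1: "t * (1 + k * t) \<le> l"
  proof -
    have "l - t * (1 + k * t) = (1 - t) * (1 + k * (1 + t))" by (simp add: lk algebra_simps)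
    moreover have "1 + k * (1 + t) > 0"
    proof (cases "k \<ge> 0")
      case True then show ?thesis using t0 by (simp add: add_pos_nonneg)
    next
      case False
      then have "k * (1 + t) \<ge> 2 * k" using t0 by (simp add: mult_left_mono_neg)
      then show ?thesis using l lk by linarith
    qed
    ultimately show ?thesis using t0 by (smt (verit) mult_pos_pos)
  qed
  have P: "g\<^sup>2 * l + 4 * k * (g\<^sup>2 + 1 - l) * (t * (1 + k * t)) > 0"
  proof (cases "k * (g\<^sup>2 + 1 - l) \<ge> 0")
    case True
    then have "4 * k * (g\<^sup>2 + 1 - l) * (t * (1 + k * t)) \<ge> 0" using s0 by simp
    moreover have "g\<^sup>2 * l > 0" using g l0 by simp
    ultimately show ?thesis by linarith
  next
    case False
    then have c2: "g\<^sup>2 + 4 * k * (g\<^sup>2 + 1 - l) > 0" using cond by (simp add: k_def)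
    have "(k * (g\<^sup>2 + 1 - l)) * (t * (1 + k * t)) \<ge> (k * (g\<^sup>2 + 1 - l)) * l"
      using False s1 by (simp add: mult_left_mono_neg)
    moreover have "l * (g\<^sup>2 + 4 * k * (g\<^sup>2 + 1 - l)) > 0" using c2 l0 by simp
    ultimately show ?thesis by (simp add: algebra_simps)
  qed
  have "L < R"
  proof (cases "L \<le> 0")
    case True then show ?thesis using Rpos by simp
  next
    case False
    have "l * L\<^sup>2 < l * R\<^sup>2" using ident P by linarith
    then have "L\<^sup>2 < R\<^sup>2" using l0 by simp
    then show ?thesis using Rpos by (simp add: power2_less_imp_less)
  qed
  then show ?thesis by (simp add: L_def R_def G_def k_def u_def t_def)
qed

lemma Hf_deriv:
  assumes "l > 0" "x\<^sup>2 \<le> 1"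
  shows "((\<lambda>c. Hf G g l c) has_real_derivative
     (G * (2 * (l - 1) * x / l) - g * (sqrt (Bf l x) + x * ((2 * (l - 1) * x / l) / (2 * sqrt (Bf l x)))))) (at x)"
proof -
  have B: "Bf l x > 0" using Bf_ge(2)[OF assms] .
  have d: "((\<lambda>c. Bf l c) has_real_derivative (2 * (l - 1) * x / l)) (at x)"
    unfolding Bf_def using assms(1) by (auto intro!: derivative_eq_intros simp: field_simps)
  have ds: "((\<lambda>c. sqrt (Bf l c)) has_real_derivative (inverse (sqrt (Bf l x)) / 2 * (2 * (l - 1) * x / l))) (at x)"
    using DERIV_chain2[OF DERIV_real_sqrt[OF B] d] .
  have "((\<lambda>c. G * Bf l c - g * c * sqrt (Bf l c)) has_real_derivative
     (G * (2 * (l - 1) * x / l) - (g * sqrt (Bf l x) + (g * x) * (inverse (sqrt (Bf l x)) / 2 * (2 * (l - 1) * x / l))))) (at x)"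
  proof -
    have i: "((\<lambda>c. g * c) has_real_derivative g * 1) (at x)" by (intro DERIV_cmult DERIV_ident)
    have m: "((\<lambda>c. g * c * sqrt (Bf l c)) has_real_derivative
       (g * 1) * sqrt (Bf l x) + (inverse (sqrt (Bf l x)) / 2 * (2 * (l - 1) * x / l)) * (g * x)) (at x)"
      using DERIV_mult[OF i ds] .
    show ?thesis using DERIV_diff[OF DERIV_cmult[OF d, of G] m] by (simp add: algebra_simps)
  qed
  then show ?thesis unfolding Hf_def
    by (rule DERIV_cong) (simp add: field_simps)
qed

lemma Hf_decr:
  fixes g l c1 c2 :: real
  assumes g: "g > 0" and l: "l > 1/2"
    and cond: "(l - 1) * (g\<^sup>2 + 1 - l) \<ge> 0 \<or> g\<^sup>2 + 4 * (l - 1) * (g\<^sup>2 + 1 - l) > 0"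
    and c: "-1 \<le> c1" "c1 < c2" "c2 \<le> 1"
  shows "Hf (sqrt (g\<^sup>2 + 1)) g l c2 < Hf (sqrt (g\<^sup>2 + 1)) g l c1"
proof (rule DERIV_neg_imp_decreasing_open[OF c(2)])
  have l0: "l > 0" using l by simp
  fix x assume x: "c1 < x" "x < c2"
  then have x2: "x\<^sup>2 < 1" using c by (simp add: abs_square_less_1)
  define G where "G = sqrt (g\<^sup>2 + 1)"
  define u where "u = sqrt (Bf l x)"
  have B: "Bf l x > 0" using Bf_ge(2)[OF l0] x2 by simp
  then have u0: "u > 0" by (simp add: u_def)
  have "u * u = Bf l x" using B by (simp add: u_def)
  then have uu: "u * u = (1 + (l - 1) * x\<^sup>2) / l" by (simp add: Bf_def)
  define D where "D = G * (2 * (l - 1) * x / l) - g * (u + x * ((2 * (l - 1) * x / l) / (2 * u)))"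
  have "D * u = G * (2 * (l - 1) * x / l) * u - g * (u * u) - g * x * ((l - 1) * x / l)"
    unfolding D_def using u0 l0 by (simp add: field_simps)
  also have "\<dots> = (2 * G * (l - 1) * x * u - g * (1 + 2 * (l - 1) * x\<^sup>2)) / l"
    unfolding uu using l0 by (simp add: field_simps power2_eq_square)
  finally have "D * u = (2 * G * (l - 1) * x * u - g * (1 + 2 * (l - 1) * x\<^sup>2)) / l" .
  moreover have "2 * G * (l - 1) * x * u < g * (1 + 2 * (l - 1) * x\<^sup>2)"
    using key_ineq[OF g l x2 cond] by (simp add: G_def u_def)
  ultimately have "D * u < 0" using l0 by (simp add: divide_neg_pos)
  then have "D < 0" using u0 by (simp add: mult_less_0_iff)
  moreover have "((\<lambda>c. Hf G g l c) has_real_derivative D) (at x)"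
    unfolding D_def u_def using Hf_deriv[OF l0 less_imp_le[OF x2]] .
  ultimately show "\<exists>y. ((\<lambda>c. Hf (sqrt (g\<^sup>2 + 1)) g l c) has_real_derivative y) (at x) \<and> y < 0"
    by (auto simp: G_def)
next
  show "continuous_on {c1..c2} (Hf (sqrt (g\<^sup>2 + 1)) g l)"
    unfolding Hf_def Bf_def using l by (intro continuous_intros) auto
qed

lemma x1_exists:
  assumes "-pi \<le> w" "w \<le> pi"
  shows "\<exists>x. 0 \<le> x \<and> x < 2 * pi \<and> cos (x - w) = 1"
proof (cases "w \<ge> 0")
  case True
  have "w < 2 * pi" using assms pi_gt_zero by linarith
  then show ?thesis using True by (intro exI[of _ w]) auto
next
  case False then show ?thesis using assms by (intro exI[of _ "w + 2 * pi"]) auto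
qed

lemma x2_exists:
  assumes "-pi \<le> w" "w \<le> pi"
  shows "\<exists>x. 0 \<le> x \<and> x < 2 * pi \<and> cos (x - w) = -1"
proof (cases "w < pi")
  case True then show ?thesis using assms by (intro exI[of _ "w + pi"]) auto
next
  case False then have "w = pi" using assms by simp
  then show ?thesis by (intro exI[of _ 0]) auto
qed

lemma cos1_unique:
  assumes "0 \<le> x" "x < 2 * pi" "0 \<le> y" "y < 2 * pi" "cos (x - w) = 1" "cos (y - w) = 1"
  shows "x = y"
proof -
  obtain n :: int where n: "x - w = real_of_int n * 2 * pi" using assms(5) cos_one_2pi_int by blast
  obtain m :: int where m: "y - w = real_of_int m * 2 * pi" using assms(6) cos_one_2pi_int by blast
  have "x - y = real_of_int (n - m) * (2 * pi)" using n m by (simp add: algebra_simps)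
  moreover have "\<bar>x - y\<bar> < 2 * pi" using assms by auto
  ultimately have "\<bar>real_of_int (n - m)\<bar> < 1" by (simp add: abs_mult)
  then have "n = m" by linarith
  then show ?thesis using n m by simp
qed

lemma sin_of_cos_m1: "cos (a::real) = -1 \<Longrightarrow> sin a = 0"
  using sin_cos_squared_add[of a] by simp

lemma uni_generic:
  fixes F :: "real \<Rightarrow> real"
  assumes mono: "\<And>c1 c2. -1 \<le> c1 \<Longrightarrow> c1 < c2 \<Longrightarrow> c2 \<le> 1 \<Longrightarrow> F c1 < F c2"
    and w: "-pi \<le> w" "w \<le> pi"
  shows "unimodal_circ (\<lambda>\<theta>. F (cos (\<theta> - w)))"
proof -
  let ?f = "\<lambda>\<theta>. F (cos (\<theta> - w))"
  have lm: "is_local_max ?f x \<longleftrightarrow> cos (x - w) = 1" for x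
  proof
    assume "is_local_max ?f x"
    then obtain e where e: "e > 0" "\<forall>y. \<bar>y - x\<bar> < e \<longrightarrow> F (cos (y - w)) \<le> F (cos (x - w))"
      unfolding is_local_max_def by auto
    have le: "cos (y - w) \<le> cos (x - w)" if "\<bar>y - x\<bar> < e" for y
    proof (rule ccontr)
      assume "\<not> ?thesis" then have "cos (x - w) < cos (y - w)" by simp
      then have "F (cos (x - w)) < F (cos (y - w))" using mono cos_ge_minus_one cos_le_one by blast
      with e that show False by force
    qed
    have "((\<lambda>y. cos (y - w)) has_real_derivative - sin (x - w)) (at x)"
      by (auto intro!: derivative_eq_intros)
    moreover have "\<forall>y. \<bar>x - y\<bar> < e \<longrightarrow> cos (y - w) \<le> cos (x - w)" using le by (simp add: abs_minus_commute)
    ultimately have "- sin (x - w) = 0" using DERIV_local_max e(1) by blast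
    then have s: "sin (x - w) = 0" by simp
    then have "(cos (x - w))\<^sup>2 = 1" using sin_cos_squared_add[of "x - w"] by simp
    then have "cos (x - w) = 1 \<or> cos (x - w) = -1" by (simp add: power2_eq_1_iff)
    moreover have "cos (x - w) \<noteq> -1"
    proof
      assume c: "cos (x - w) = -1"
      define d where "d = min (e/2) 1"
      have d: "0 < d" "d < e" "d \<le> 1" using e(1) by (auto simp: d_def)
      have "cos (x + d - w) = - cos d" using cos_add[of "x - w" d] c s by (simp add: algebra_simps)
      moreover have "cos d < cos 0" using d pi_gt3 by (intro cos_monotone_0_pi) auto
      ultimately have "cos (x + d - w) > cos (x - w)" using c by simp
      moreover have "\<bar>(x + d) - x\<bar> < e" using d by simp
      ultimately show False using le by fastforce
    qed
    ultimately show "cos (x - w) = 1" by blast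
  next
    assume c: "cos (x - w) = 1"
    have "F (cos (y - w)) \<le> F (cos (x - w))" for y
    proof (cases "cos (y - w) = 1")
      case True then show ?thesis using c by simp
    next
      case False then have "cos (y - w) < 1" using cos_le_one[of "y - w"] by linarith
      then show ?thesis using mono[of "cos (y - w)" 1] c cos_ge_minus_one by simp
    qed
    then show "is_local_max ?f x" unfolding is_local_max_def by (auto intro: exI[of _ 1])
  qed
  obtain x1 where x1: "0 \<le> x1" "x1 < 2 * pi" "cos (x1 - w) = 1" using x1_exists[OF w] by blast
  show ?thesis unfolding unimodal_circ_def circ_local_maxima_def
  proof (rule ex1I[of _ x1])
    show "x1 \<in> {x \<in> {0..<2 * pi}. is_local_max ?f x}" using x1 lm by auto
  next
    fix y assume "y \<in> {x \<in> {0..<2 * pi}. is_local_max ?f x}"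
    then show "y = x1" using x1 lm cos1_unique[of y x1 w] by auto
  qed
qed

lemma bi_generic:
  fixes F :: "real \<Rightarrow> real"
  assumes m1: "\<And>c. -1 \<le> c \<Longrightarrow> c \<le> 1 \<Longrightarrow> F c \<le> F 1"
    and m2: "\<And>c. -1 \<le> c \<Longrightarrow> c \<le> 0 \<Longrightarrow> F c \<le> F (-1)"
    and w: "-pi \<le> w" "w \<le> pi"
  shows "\<exists>x y. x \<in> circ_local_maxima (\<lambda>\<theta>. F (cos (\<theta> - w))) \<and>
                y \<in> circ_local_maxima (\<lambda>\<theta>. F (cos (\<theta> - w))) \<and> x \<noteq> y"
proof -
  let ?f = "\<lambda>\<theta>. F (cos (\<theta> - w))"
  obtain x1 where x1: "0 \<le> x1" "x1 < 2 * pi" "cos (x1 - w) = 1" using x1_exists[OF w] by blast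
  obtain x2 where x2: "0 \<le> x2" "x2 < 2 * pi" "cos (x2 - w) = -1" using x2_exists[OF w] by blast
  have "is_local_max ?f x1" unfolding is_local_max_def
    using x1 m1 cos_ge_minus_one cos_le_one by (auto intro!: exI[of _ 1])
  moreover have "is_local_max ?f x2" unfolding is_local_max_def
  proof (intro exI[of _ "pi/2"] conjI allI impI)
    show "pi / 2 > 0" by simp
    fix y assume y: "\<bar>y - x2\<bar> < pi / 2"
    have s: "sin (x2 - w) = 0" using sin_of_cos_m1 x2(3) .
    have "cos (y - w) = cos ((x2 - w) + (y - x2))" by simp
    also have "\<dots> = - cos (y - x2)" using cos_add[of "x2 - w" "y - x2"] s x2(3) by simp
    finally have cy: "cos (y - w) = - cos (y - x2)" .
    have y1: "-(pi/2) < y - x2" "y - x2 < pi/2" using y unfolding abs_less_iff by linarith+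
    moreover have "cos (y - x2) > 0" using y1 by (intro cos_gt_zero_pi)
    ultimately have "cos (y - w) \<le> 0" using cy by simp
    then show "?f y \<le> ?f x2" using m2 cos_ge_minus_one x2(3) by simp
  qed
  moreover have "x1 \<noteq> x2" using x1 x2 by auto
  ultimately show ?thesis unfolding circ_local_maxima_def using x1 x2 by auto
qed

lemma caseD_ineq:
  fixes g l c :: real
  assumes g: "g > 0" and l: "l > 0" "l \<le> 1/2" and c: "-1 \<le> c" "c \<le> 1"
  shows "Hf (sqrt (g\<^sup>2 + 1)) g l c \<ge> sqrt (g\<^sup>2 + 1) - g"
    and "c \<le> 0 \<Longrightarrow> Hf (sqrt (g\<^sup>2 + 1)) g l c \<ge> sqrt (g\<^sup>2 + 1) + g"
proof -
  define G where "G = sqrt (g\<^sup>2 + 1)"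
  define B where "B = Bf l c"
  define u where "u = sqrt B"
  have Gg: "G > g" unfolding G_def by (metis less_add_one real_less_rsqrt power2_eq_square)
  have c2: "c\<^sup>2 \<le> 1" using c by (simp add: abs_square_le_1)
  have il: "1 / l \<ge> 2" using l by (simp add: field_simps)
  have "B - 1 = (1 - c\<^sup>2) * (1 / l - 1)" unfolding B_def using Bf_alt[OF l(1)] l by (simp add: field_simps)
  moreover have "(1 - c\<^sup>2) * (1 / l - 1) \<ge> (1 - c\<^sup>2) * 1" using c2 il by (intro mult_left_mono) auto
  ultimately have Bm: "B - 1 \<ge> 1 - c\<^sup>2" by simp
  then have B1: "B \<ge> 1" using c2 by simp
  then have u1: "u \<ge> 1" by (simp add: u_def)
  have uu: "u * u = B" using B1 by (simp add: u_def)
  have H: "Hf G g l c = G * (u * u) - g * c * u" unfolding Hf_def B_def[symmetric] u_def[symmetric] uu ..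
  have "g * c * u \<le> g * u" using g u1 c by (simp add: mult_right_mono)
  moreover have "G * (u * u) - g * u - (G - g) = (u - 1) * (G * (u + 1) - g)" by (simp add: algebra_simps)
  moreover have "(u - 1) * (G * (u + 1) - g) \<ge> 0"
  proof -
    have "G * (u + 1) \<ge> G * 1" using Gg g u1 by (intro mult_left_mono) auto
    then show ?thesis using u1 Gg by simp
  qed
  ultimately show "Hf (sqrt (g\<^sup>2 + 1)) g l c \<ge> sqrt (g\<^sup>2 + 1) - g" using H by (simp add: G_def)
  assume c0: "c \<le> 0"
  have "c * u \<le> c * 1" using u1 c0 by (rule mult_left_mono_neg)
  then have "g * c * u \<le> g * c" using g by (simp add: mult_left_mono mult.assoc)
  moreover have "G * (B - 1) \<ge> g * (1 + c)"
  proof -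
    have "1 - c\<^sup>2 = (1 - c) * (1 + c)" by (simp add: algebra_simps power2_eq_square)
    also have "\<dots> \<ge> 1 * (1 + c)" using c c0 by (intro mult_right_mono) auto
    finally have "B - 1 \<ge> 1 + c" using Bm by simp
    then have "G * (B - 1) \<ge> G * (1 + c)" using Gg g by (intro mult_left_mono) auto
    moreover have "G * (1 + c) \<ge> g * (1 + c)" using Gg c by (intro mult_right_mono) auto
    ultimately show ?thesis by simp
  qed
  ultimately have "Hf G g l c \<ge> G + g"
    using H uu by (simp add: algebra_simps)
  then show "Hf (sqrt (g\<^sup>2 + 1)) g l c \<ge> sqrt (g\<^sup>2 + 1) + g" by (simp add: G_def)
qed

lemma density_fun:
  assumes "l > 0"
  shows "gcpc_density w g l = (\<lambda>\<theta>. (\<lambda>c. 1 / (2 * pi * sqrt l * Hf (sqrt (g\<^sup>2 + 1)) g l c)) (cos (\<theta> - w)))"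
  using density_eq[OF assms] by auto

lemma unimodal_cond:
  fixes g l w :: real
  assumes g: "g > 0" and l: "l > 1/2"
    and cond: "(l - 1) * (g\<^sup>2 + 1 - l) \<ge> 0 \<or> g\<^sup>2 + 4 * (l - 1) * (g\<^sup>2 + 1 - l) > 0"
    and w: "-pi \<le> w" "w \<le> pi"
  shows "unimodal_circ (gcpc_density w g l)"
proof -
  have l0: "l > 0" using l by simp
  have K: "2 * pi * sqrt l > 0" using l0 by simp
  show ?thesis unfolding density_fun[OF l0]
  proof (rule uni_generic[OF _ w])
    fix c1 c2 :: real assume c: "-1 \<le> c1" "c1 < c2" "c2 \<le> 1"
    have d: "Hf (sqrt (g\<^sup>2 + 1)) g l c2 < Hf (sqrt (g\<^sup>2 + 1)) g l c1"
      using Hf_decr[OF g l cond c] .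
    have "c2\<^sup>2 \<le> 1" using c by (simp add: abs_square_le_1)
    then have p: "Hf (sqrt (g\<^sup>2 + 1)) g l c2 > 0" using Hf_pos[OF g l0] by simp
    show "1 / (2 * pi * sqrt l * Hf (sqrt (g\<^sup>2 + 1)) g l c1) < 1 / (2 * pi * sqrt l * Hf (sqrt (g\<^sup>2 + 1)) g l c2)"
    proof -
      have a: "2 * pi * sqrt l * Hf (sqrt (g\<^sup>2 + 1)) g l c2 < 2 * pi * sqrt l * Hf (sqrt (g\<^sup>2 + 1)) g l c1"
        by (rule mult_strict_left_mono[OF d K])
      have b: "2 * pi * sqrt l * Hf (sqrt (g\<^sup>2 + 1)) g l c2 > 0" using p K by simp
      have c: "2 * pi * sqrt l * Hf (sqrt (g\<^sup>2 + 1)) g l c1 > 0" using a b by linarith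
      show ?thesis using divide_strict_left_mono[OF a zero_less_one mult_pos_pos[OF c b]] .
    qed
  qed
qed

lemma bimodal:
  fixes g l w :: real
  assumes g: "g > 0" and l: "l > 0" "l \<le> 1/2" and w: "-pi \<le> w" "w \<le> pi"
  shows "\<exists>x y. x \<in> circ_local_maxima (gcpc_density w g l) \<and>
                y \<in> circ_local_maxima (gcpc_density w g l) \<and> x \<noteq> y"
proof -
  have K: "2 * pi * sqrt l > 0" using l by simp
  let ?H = "Hf (sqrt (g\<^sup>2 + 1)) g l"
  have Gg: "sqrt (g\<^sup>2 + 1) > g" by (metis less_add_one real_less_rsqrt power2_eq_square)
  have H1: "?H 1 = sqrt (g\<^sup>2 + 1) - g" using l by (simp add: Hf_def Bf_def)
  have Hm1: "?H (-1) = sqrt (g\<^sup>2 + 1) + g" using l by (simp add: Hf_def Bf_def)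
  show ?thesis unfolding density_fun[OF l(1)]
  proof (rule bi_generic[OF _ _ w])
    fix c :: real assume c: "-1 \<le> c" "c \<le> 1"
    have "?H c \<ge> ?H 1" "?H 1 > 0" using caseD_ineq(1)[OF g l c] H1 Gg by auto
    then show "1 / (2 * pi * sqrt l * ?H c) \<le> 1 / (2 * pi * sqrt l * ?H 1)"
      using K l by (intro divide_left_mono) (auto intro!: mult_pos_pos mult_left_mono)
  next
    fix c :: real assume c: "-1 \<le> c" "c \<le> 0"
    have "?H c \<ge> ?H (-1)" "?H (-1) > 0" using caseD_ineq(2)[OF g l c(1) _ c(2)] c Hm1 Gg g by auto
    then show "1 / (2 * pi * sqrt l * ?H c) \<le> 1 / (2 * pi * sqrt l * ?H (-1))"
      using K l by (intro divide_left_mono) (auto intro!: mult_pos_pos mult_left_mono)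
  qed
qed

theorem mainTheorem8:
  fixes \<omega> \<gamma> lam :: real
  assumes "\<gamma> > 0" and "lam > 0" and "-pi \<le> \<omega>" and "\<omega> \<le> pi"
  defines "f \<equiv> gcpc_density \<omega> \<gamma> lam"
  shows "(lam = 1 \<longrightarrow> unimodal_circ f)
       \<and> (1 < lam \<and> lam \<le> \<gamma>\<^sup>2 + 1 \<longrightarrow> unimodal_circ f)
       \<and> (lam > \<gamma>\<^sup>2 + 1 \<and> (\<gamma>\<^sup>2 + 1) * (lam - 1) > (lam - \<gamma>\<^sup>2 - 1) * (2 * lam - 1)\<^sup>2
            \<longrightarrow> unimodal_circ f)
       \<and> (1/2 < lam \<and> lam < 1 \<and> (\<gamma>\<^sup>2 + 1 - lam) * (1 - 2 * lam)\<^sup>2 > (\<gamma>\<^sup>2 + 1) * (1 - lam)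
            \<longrightarrow> unimodal_circ f)
       \<and> (lam \<le> 1/2 \<longrightarrow> \<not> unimodal_circ f
            \<and> (\<exists>x y. x \<in> circ_local_maxima f \<and> y \<in> circ_local_maxima f \<and> x \<noteq> y))"
proof (intro conjI impI)
  note g = assms(1) and l0 = assms(2) and w = assms(3,4)
  let ?E = "\<gamma>\<^sup>2 + 4 * (lam - 1) * (\<gamma>\<^sup>2 + 1 - lam)"
  show "unimodal_circ f" if "lam = 1"
    unfolding f_def by (rule unimodal_cond[OF g _ _ w]) (use that in auto)
  show "unimodal_circ f" if "1 < lam \<and> lam \<le> \<gamma>\<^sup>2 + 1"
    unfolding f_def by (rule unimodal_cond[OF g _ _ w]) (use that in auto)
  show "unimodal_circ f" if h: "lam > \<gamma>\<^sup>2 + 1 \<and> (\<gamma>\<^sup>2 + 1) * (lam - 1) > (lam - \<gamma>\<^sup>2 - 1) * (2 * lam - 1)\<^sup>2"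
  proof -
    have "(\<gamma>\<^sup>2 + 1) * (lam - 1) - (lam - \<gamma>\<^sup>2 - 1) * (2 * lam - 1)\<^sup>2 = lam * ?E"
      by (simp add: algebra_simps power2_eq_square)
    then have "lam * ?E > 0" using h by linarith
    then have "?E > 0" using l0 by (simp add: zero_less_mult_iff)
    moreover have "lam > 1/2" using h zero_le_power2[of \<gamma>] by linarith
    ultimately show ?thesis unfolding f_def using unimodal_cond[OF g _ _ w] by blast
  qed
  show "unimodal_circ f" if h: "1/2 < lam \<and> lam < 1 \<and> (\<gamma>\<^sup>2 + 1 - lam) * (1 - 2 * lam)\<^sup>2 > (\<gamma>\<^sup>2 + 1) * (1 - lam)"
  proof -
    have "(\<gamma>\<^sup>2 + 1 - lam) * (1 - 2 * lam)\<^sup>2 - (\<gamma>\<^sup>2 + 1) * (1 - lam) = lam * ?E"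
      by (simp add: algebra_simps power2_eq_square)
    then have "lam * ?E > 0" using h by linarith
    then have "?E > 0" using l0 by (simp add: zero_less_mult_iff)
    then show ?thesis unfolding f_def using unimodal_cond[OF g _ _ w] h by blast
  qed
  assume h: "lam \<le> 1/2"
  show ex: "\<exists>x y. x \<in> circ_local_maxima f \<and> y \<in> circ_local_maxima f \<and> x \<noteq> y"
    unfolding f_def using bimodal[OF g l0 h w] .
  show "\<not> unimodal_circ f"
    using ex unfolding unimodal_circ_def by blast
qed

end
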